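(* The following quantifier-free set theories are all non-convex: $\mathsf{MLSS}$ ($\mathsf{MLS}$ extended with literals $x=\{y\}$), $\mathsf{MLSP}$ ($\mathsf{MLS}$ extended with literals $x=\mathcal{P}(y)$), $\mathsf{MLSSP}$ ($\mathsf{MLS}$ extended with both), $\mathsf{MLSU}$ ($\mathsf{MLS}$ extended with literals $x=\bigcup y$), $\mathsf{MLS}\times$ ($\mathsf{MLS}$ extended with the Cartesian product $y\times z$), $\mathsf{MLS}\otimes$ ($\mathsf{MLS}$ extended with the unordered Cartesian product $y\otimes z$), $\mathsf{BST}\times$ and $\mathsf{BST}\otimes$ (Boolean set theory $\mathsf{BST}$ extended with the Cartesian product, respectively the unordered Cartesian product).
   Context: $\mathsf{MLS}$ is the quantifier-free propositional closure of atoms $x=\varnothing$, $x=y$, $x\subseteq y$, $x\in y$, $x=y\setminus z$, $x=y\cup z$, $x=y\cap z$ over set variables. $\mathsf{BST}$ consists of conjunctions of literals of the forms $s=\varnothing$, $s\neq\varnothing$, $s\cap t=\varnothing$, $s\cap t\neq\varnothing$, $s\subseteq t$, $s\not\subseteq t$, $s=t$, $s\neq t$, where $s,t$ are terms built from set variables with $\cup,\cap,\setminus$ (no membership). Formulae are interpreted by set assignments (maps from finitely many set variables into the von Neumann universe) with the usual meanings; $\mathcal{P}$ is powerset, $\bigcup y$ is the union of the members of $y$, $\times$ is the Cartesian product of ordered pairs, and $y\otimes z=\{\{a,b\}\mid a\in y,\ b\in z\}$. A theory is convex if for every conjunction of its literals $\psi$ and every finite nonempty disjunction $\bigvee_i x_i=y_i$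 of equalities, whenever every set assignment satisfying $\psi$ satisfies the disjunction, some single disjunct $x_i=y_i$ is satisfied by every set assignment satisfying $\psi$. *)

theory Defs
  imports Main
begin

text \<open>A universe of sets is a type 'v with a membership map E (E a = the members of a).
  The models of these axioms are (up to isomorphism) the V_kappa, kappa inaccessible;
  the von Neumann universe itself cannot be constructed in HOL.\<close>

definition zf_universe :: "('v \<Rightarrow> 'v set) \<Rightarrow> bool" where
  "zf_universe E \<longleftrightarrow>
     inj E
   \<and> wf {(x, y). x \<in> E y}
   \<and> (\<forall>a b. \<exists>c. E c = {a, b})
   \<and> (\<forall>a. \<exists>c. E c = \<Union> (E ` E a))
   \<and> (\<forall>a. \<exists>c. E c = {x. E x \<subseteq> E a})
   \<and> (\<forall>a S. S \<subseteq> E a \<longrightarrow> (\<exists>c. E c = S))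
   \<and> (\<forall>a (f :: 'v \<Rightarrow> 'v). \<exists>c. E c = f ` E a)
   \<and> (\<exists>a. infinite (E a))"

definition mk :: "('v \<Rightarrow> 'v set) \<Rightarrow> 'v set \<Rightarrow> 'v" where
  "mk E S = (SOME c. E c = S)"

definition v_empty :: "('v \<Rightarrow> 'v set) \<Rightarrow> 'v" where
  "v_empty E = mk E {}"
definition v_un :: "('v \<Rightarrow> 'v set) \<Rightarrow> 'v \<Rightarrow> 'v \<Rightarrow> 'v" where
  "v_un E a b = mk E (E a \<union> E b)"
definition v_int :: "('v \<Rightarrow> 'v set) \<Rightarrow> 'v \<Rightarrow> 'v \<Rightarrow> 'v" where
  "v_int E a b = mk E (E a \<inter> E b)"
definition v_diff :: "('v \<Rightarrow> 'v set) \<Rightarrow> 'v \<Rightarrow> 'v \<Rightarrow> 'v" where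
  "v_diff E a b = mk E (E a - E b)"
definition v_sing :: "('v \<Rightarrow> 'v set) \<Rightarrow> 'v \<Rightarrow> 'v" where
  "v_sing E a = mk E {a}"
definition v_upair :: "('v \<Rightarrow> 'v set) \<Rightarrow> 'v \<Rightarrow> 'v \<Rightarrow> 'v" where
  "v_upair E a b = mk E {a, b}"
definition v_opair :: "('v \<Rightarrow> 'v set) \<Rightarrow> 'v \<Rightarrow> 'v \<Rightarrow> 'v" where
  "v_opair E a b = v_upair E (v_sing E a) (v_upair E a b)"
definition v_pow :: "('v \<Rightarrow> 'v set) \<Rightarrow> 'v \<Rightarrow> 'v" where
  "v_pow E a = mk E {x. E x \<subseteq> E a}"
definition v_bigun :: "('v \<Rightarrow> 'v set) \<Rightarrow> 'v \<Rightarrow> 'v" where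
  "v_bigun E a = mk E (\<Union> (E ` E a))"
definition v_prod :: "('v \<Rightarrow> 'v set) \<Rightarrow> 'v \<Rightarrow> 'v \<Rightarrow> 'v" where
  "v_prod E a b = mk E {v_opair E x y | x y. x \<in> E a \<and> y \<in> E b}"
definition v_uprod :: "('v \<Rightarrow> 'v set) \<Rightarrow> 'v \<Rightarrow> 'v \<Rightarrow> 'v" where
  "v_uprod E a b = mk E {v_upair E x y | x y. x \<in> E a \<and> y \<in> E b}"

datatype stm =
    Var nat | Emp | TUn stm stm | TInt stm stm | Diff stm stm
  | Sing stm | Pow stm | BigUn stm | Prod stm stm | UProd stm stm

datatype atom = Eq stm stm | Sub stm stm | Mem stm stm

datatype lit = Pos atom | Neg atom

fun ev :: "('v \<Rightarrow> 'v set) \<Rightarrow> (nat \<Rightarrow> 'v) \<Rightarrow> stm \<Rightarrow> 'v" where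
  "ev E M (Var x) = M x"
| "ev E M Emp = v_empty E"
| "ev E M (TUn s t) = v_un E (ev E M s) (ev E M t)"
| "ev E M (TInt s t) = v_int E (ev E M s) (ev E M t)"
| "ev E M (Diff s t) = v_diff E (ev E M s) (ev E M t)"
| "ev E M (Sing s) = v_sing E (ev E M s)"
| "ev E M (Pow s) = v_pow E (ev E M s)"
| "ev E M (BigUn s) = v_bigun E (ev E M s)"
| "ev E M (Prod s t) = v_prod E (ev E M s) (ev E M t)"
| "ev E M (UProd s t) = v_uprod E (ev E M s) (ev E M t)"

fun holds_atom :: "('v \<Rightarrow> 'v set) \<Rightarrow> (nat \<Rightarrow> 'v) \<Rightarrow> atom \<Rightarrow> bool" where
  "holds_atom E M (Eq s t) = (ev E M s = ev E M t)"
| "holds_atom E M (Sub s t) = (E (ev E M s) \<subseteq> E (ev E M t))"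
| "holds_atom E M (Mem s t) = (ev E M s \<in> E (ev E M t))"

fun holds_lit :: "('v \<Rightarrow> 'v set) \<Rightarrow> (nat \<Rightarrow> 'v) \<Rightarrow> lit \<Rightarrow> bool" where
  "holds_lit E M (Pos a) = holds_atom E M a"
| "holds_lit E M (Neg a) = (\<not> holds_atom E M a)"

definition sat :: "('v \<Rightarrow> 'v set) \<Rightarrow> (nat \<Rightarrow> 'v) \<Rightarrow> lit list \<Rightarrow> bool" where
  "sat E M \<psi> \<longleftrightarrow> (\<forall>l\<in>set \<psi>. holds_lit E M l)"

definition lits_of :: "atom set \<Rightarrow> lit set" where
  "lits_of A = Pos ` A \<union> Neg ` A"

definition mls_atoms :: "atom set" where
  "mls_atoms =
     {Eq (Var x) Emp | x. True}
   \<union> {Eq (Var x) (Var y) | x y. True}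
   \<union> {Sub (Var x) (Var y) | x y. True}
   \<union> {Mem (Var x) (Var y) | x y. True}
   \<union> {Eq (Var x) (Diff (Var y) (Var z)) | x y z. True}
   \<union> {Eq (Var x) (TUn (Var y) (Var z)) | x y z. True}
   \<union> {Eq (Var x) (TInt (Var y) (Var z)) | x y z. True}"

definition sing_atoms :: "atom set" where
  "sing_atoms = {Eq (Var x) (Sing (Var y)) | x y. True}"
definition pow_atoms :: "atom set" where
  "pow_atoms = {Eq (Var x) (Pow (Var y)) | x y. True}"
definition bigun_atoms :: "atom set" where
  "bigun_atoms = {Eq (Var x) (BigUn (Var y)) | x y. True}"
definition prod_atoms :: "atom set" where
  "prod_atoms = {Eq (Var x) (Prod (Var y) (Var z)) | x y z. True}"
definition uprod_atoms :: "atom set" where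
  "uprod_atoms = {Eq (Var x) (UProd (Var y) (Var z)) | x y z. True}"

definition MLSS :: "lit set" where "MLSS = lits_of (mls_atoms \<union> sing_atoms)"
definition MLSP :: "lit set" where "MLSP = lits_of (mls_atoms \<union> pow_atoms)"
definition MLSSP :: "lit set" where "MLSSP = lits_of (mls_atoms \<union> sing_atoms \<union> pow_atoms)"
definition MLSU :: "lit set" where "MLSU = lits_of (mls_atoms \<union> bigun_atoms)"
definition MLS_prod :: "lit set" where "MLS_prod = lits_of (mls_atoms \<union> prod_atoms)"
definition MLS_uprod :: "lit set" where "MLS_uprod = lits_of (mls_atoms \<union> uprod_atoms)"

fun bst_term :: "bool \<Rightarrow> bool \<Rightarrow> stm \<Rightarrow> bool" where
  "bst_term p u (Var x) = True"
| "bst_term p u (TUn s t) = (bst_term p u s \<and> bst_term p u t)"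
| "bst_term p u (TInt s t) = (bst_term p u s \<and> bst_term p u t)"
| "bst_term p u (Diff s t) = (bst_term p u s \<and> bst_term p u t)"
| "bst_term p u (Prod s t) = (p \<and> bst_term p u s \<and> bst_term p u t)"
| "bst_term p u (UProd s t) = (u \<and> bst_term p u s \<and> bst_term p u t)"
| "bst_term p u _ = False"

definition bst_atoms :: "(stm \<Rightarrow> bool) \<Rightarrow> atom set" where
  "bst_atoms T =
     {Eq s Emp | s. T s}
   \<union> {Eq (TInt s t) Emp | s t. T s \<and> T t}
   \<union> {Sub s t | s t. T s \<and> T t}
   \<union> {Eq s t | s t. T s \<and> T t}"

definition BST_prod :: "lit set" where "BST_prod = lits_of (bst_atoms (bst_term True False))"
definition BST_uprod :: "lit set" where "BST_uprod = lits_of (bst_atoms (bst_term False True))"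

definition convex :: "('v \<Rightarrow> 'v set) \<Rightarrow> lit set \<Rightarrow> bool" where
  "convex E T \<longleftrightarrow>
    (\<forall>\<psi> ds. set \<psi> \<subseteq> T \<longrightarrow> ds \<noteq> [] \<longrightarrow>
       (\<forall>M. sat E M \<psi> \<longrightarrow> (\<exists>(x, y)\<in>set ds. M x = M y)) \<longrightarrow>
       (\<exists>(x, y)\<in>set ds. \<forall>M. sat E M \<psi> \<longrightarrow> M x = M y))"

end

theory Submission
  imports Defs
begin

lemma zf_parts:
  assumes "zf_universe E"
  shows "inj E" "\<And>a b. \<exists>c. E c = {a, b}" "\<And>a. \<exists>c. E c = \<Union> (E ` E a)"
    "\<And>a. \<exists>c. E c = {x. E x \<subseteq> E a}" "\<And>a S. S \<subseteq> E a \<Longrightarrow> \<exists>c. E c = S"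
proof -
  note h = assms[unfolded zf_universe_def]
  show "inj E" using h by (elim conjE)
  show "\<And>a b. \<exists>c. E c = {a, b}" using h by (elim conjE) (erule allE)+
  show "\<And>a. \<exists>c. E c = \<Union> (E ` E a)" using h by (elim conjE) (erule allE)+
  show "\<And>a. \<exists>c. E c = {x. E x \<subseteq> E a}" using h by (elim conjE) (erule allE)+
  show "\<And>a S. S \<subseteq> E a \<Longrightarrow> \<exists>c. E c = S" using h by (elim conjE) (erule allE, erule allE, erule mp)
qed
lemma mk_eq: "\<exists>c. E c = S \<Longrightarrow> E (mk E S) = S"
  unfolding mk_def by (rule someI_ex)

context
  fixes E :: "'v \<Rightarrow> 'v set"
  assumes zf: "zf_universe E"
begin

lemma injE: "E a = E b \<Longrightarrow> a = b"
  using zf_parts(1)[OF zf] by (auto dest: injD)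

lemma E_upair: "E (v_upair E a b) = {a, b}"
  unfolding v_upair_def by (rule mk_eq, rule zf_parts(2)[OF zf])

lemma E_sing: "E (v_sing E a) = {a}"
  unfolding v_sing_def by (rule mk_eq, metis zf_parts(2)[OF zf] insert_absorb2)

lemma E_pow: "E (v_pow E a) = {x. E x \<subseteq> E a}"
  unfolding v_pow_def by (rule mk_eq, rule zf_parts(4)[OF zf])

lemma E_bigun: "E (v_bigun E a) = \<Union> (E ` E a)"
  unfolding v_bigun_def by (rule mk_eq, rule zf_parts(3)[OF zf])

lemma E_empty: "E (v_empty E) = {}"
  unfolding v_empty_def by (rule mk_eq, rule zf_parts(5)[OF zf], auto)

lemma E_un: "E (v_un E a b) = E a \<union> E b"
proof -
  obtain c where c: "E c = {a, b}" using zf_parts(2)[OF zf] by blast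
  obtain d where "E d = \<Union> (E ` E c)" using zf_parts(3)[OF zf] by blast
  then have "E d = E a \<union> E b" using c by auto
  then show ?thesis unfolding v_un_def by (intro mk_eq) blast
qed

lemma E_opair: "E (v_opair E x y) = {v_sing E x, v_upair E x y}"
  unfolding v_opair_def by (rule E_upair)

lemma E_prod: "E (v_prod E a b) = {v_opair E x y | x y. x \<in> E a \<and> y \<in> E b}"
  unfolding v_prod_def
proof (rule mk_eq, rule zf_parts(5)[OF zf])
  show "{v_opair E x y |x y. x \<in> E a \<and> y \<in> E b} \<subseteq> E (v_pow E (v_pow E (v_un E a b)))"
    by (auto simp: E_pow E_opair E_sing E_upair E_un)
qed

lemma E_uprod: "E (v_uprod E a b) = {v_upair E x y | x y. x \<in> E a \<and> y \<in> E b}"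
  unfolding v_uprod_def
proof (rule mk_eq, rule zf_parts(5)[OF zf])
  show "{v_upair E x y |x y. x \<in> E a \<and> y \<in> E b} \<subseteq> E (v_pow E (v_un E a b))"
    by (auto simp: E_pow E_upair E_un)
qed

lemma noncvx:
  assumes "set \<psi> \<subseteq> T"
    and "\<And>M. sat E M \<psi> \<Longrightarrow> M a = M b \<or> M c = M d"
    and "sat E M1 \<psi>" "M1 a \<noteq> M1 b" "sat E M2 \<psi>" "M2 c \<noteq> M2 d"
  shows "\<not> convex E T"
  unfolding convex_def
  apply (simp only: not_all not_imp)
  apply (rule exI[of _ \<psi>], rule exI[of _ "[(a,b),(c,d)]"])
  using assms by auto

end

lemma Pos_lits[simp]: "Pos a \<in> lits_of A \<longleftrightarrow> a \<in> A"
  unfolding lits_of_def by auto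

lemma convex_mono: "convex E T' \<Longrightarrow> T \<subseteq> T' \<Longrightarrow> convex E T"
  unfolding convex_def by blast


context
  fixes E :: "'v \<Rightarrow> 'v set"
  assumes zf: "zf_universe E"
begin

lemma n_ne: "v_sing E (v_empty E) \<noteq> v_empty E"
  using E_sing[OF zf] E_empty[OF zf] by (metis empty_not_insert)

lemma empty_eq: "E a = {} \<Longrightarrow> a = v_empty E"
  using injE[OF zf] E_empty[OF zf] by metis

lemma sub_sing: "E w \<subseteq> E z \<Longrightarrow> E z = {y} \<Longrightarrow> w = v_empty E \<or> w = z"
  using injE[OF zf] E_empty[OF zf] by (metis subset_singletonD)

lemma mlss: "\<not> convex E MLSS"
proof -
  define e0 where "e0 = v_empty E"
  define n where "n = v_sing E e0"
  define M1 :: "nat \<Rightarrow> 'v" where "M1 = (\<lambda>_. e0)(2 := n, 3 := n)"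
  define M2 :: "nat \<Rightarrow> 'v" where "M2 = (\<lambda>_. e0)(2 := n)"
  have nn: "n \<noteq> e0" using n_ne by (simp add: n_def e0_def)
  let ?\<psi> = "[Pos (Eq (Var 0) Emp), Pos (Eq (Var 2) (Sing (Var 1))), Pos (Sub (Var 3) (Var 2))]"
  show ?thesis
  proof (rule noncvx[OF zf, of ?\<psi> _ 3 0 3 2 M1 M2])
    show "set ?\<psi> \<subseteq> MLSS" by (simp add: MLSS_def mls_atoms_def sing_atoms_def)
    show "M 3 = M 0 \<or> M 3 = M 2" if "sat E M ?\<psi>" for M
      using that sub_sing[of "M 3" "M 2" "M 1"] E_sing[OF zf] by (auto simp: sat_def)
    show "sat E M1 ?\<psi>" by (simp add: sat_def M1_def n_def e0_def E_empty[OF zf])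
    show "M1 3 \<noteq> M1 0" using nn by (simp add: M1_def)
    show "sat E M2 ?\<psi>" by (simp add: sat_def M2_def n_def e0_def E_empty[OF zf])
    show "M2 3 \<noteq> M2 2" using nn by (simp add: M2_def)
  qed
qed


lemma pow_empty: "E a = {} \<Longrightarrow> {x. E x \<subseteq> E a} = {a}"
  using injE[OF zf] by auto

lemma mlsp: "\<not> convex E MLSP"
proof -
  define e0 where "e0 = v_empty E"
  define n where "n = v_pow E e0"
  define M1 :: "nat \<Rightarrow> 'v" where "M1 = (\<lambda>_. e0)(2 := n, 3 := n)"
  define M2 :: "nat \<Rightarrow> 'v" where "M2 = (\<lambda>_. e0)(2 := n)"
  have nn: "n \<noteq> e0" using E_pow[OF zf, of e0] E_empty[OF zf] unfolding n_def e0_def by auto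
  let ?\<psi> = "[Pos (Eq (Var 0) Emp), Pos (Eq (Var 2) (Pow (Var 0))), Pos (Sub (Var 3) (Var 2))]"
  show ?thesis
  proof (rule noncvx[OF zf, of ?\<psi> _ 3 0 3 2 M1 M2])
    show "set ?\<psi> \<subseteq> MLSP" by (simp add: MLSP_def mls_atoms_def pow_atoms_def)
    show "M 3 = M 0 \<or> M 3 = M 2" if "sat E M ?\<psi>" for M
      using that sub_sing[of "M 3" "M 2" "M 0"] E_pow[OF zf] pow_empty[of "M 0"] E_empty[OF zf]
      by (auto simp: sat_def)
    show "sat E M1 ?\<psi>" by (simp add: sat_def M1_def n_def e0_def E_empty[OF zf])
    show "M1 3 \<noteq> M1 0" using nn by (simp add: M1_def)
    show "sat E M2 ?\<psi>" by (simp add: sat_def M2_def n_def e0_def E_empty[OF zf])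
    show "M2 3 \<noteq> M2 2" using nn by (simp add: M2_def)
  qed
qed

lemma mlsu: "\<not> convex E MLSU"
proof -
  define e0 where "e0 = v_empty E"
  define n where "n = v_sing E e0"
  define M1 :: "nat \<Rightarrow> 'v" where "M1 = (\<lambda>_. e0)(2 := n, 3 := n)"
  define M2 :: "nat \<Rightarrow> 'v" where "M2 = (\<lambda>_. e0)(2 := n)"
  have nn: "n \<noteq> e0" using n_ne by (simp add: n_def e0_def)
  have bu: "v_bigun E (v_sing E (v_empty E)) = v_empty E"
    by (rule empty_eq) (simp add: E_bigun[OF zf] E_sing[OF zf] E_empty[OF zf])
  let ?\<psi> = "[Pos (Eq (Var 0) Emp), Pos (Eq (Var 0) (BigUn (Var 2))), Pos (Mem (Var 0) (Var 2)),
     Pos (Sub (Var 3) (Var 2))]"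
  show ?thesis
  proof (rule noncvx[OF zf, of ?\<psi> _ 3 0 3 2 M1 M2])
    show "set ?\<psi> \<subseteq> MLSU" by (simp add: MLSU_def mls_atoms_def bigun_atoms_def)
    show "M 3 = M 0 \<or> M 3 = M 2" if "sat E M ?\<psi>" for M
    proof -
      have h: "M 0 = v_empty E" "M 0 = v_bigun E (M 2)" "M 0 \<in> E (M 2)" "E (M 3) \<subseteq> E (M 2)"
        using that by (auto simp: sat_def)
      have "\<And>x. x \<in> E (M 2) \<Longrightarrow> x = M 0"
      proof -
        fix x assume "x \<in> E (M 2)"
        then have "E x \<subseteq> E (v_bigun E (M 2))" by (auto simp: E_bigun[OF zf])
        then have "E x = {}" using h E_empty[OF zf] by simp
        then show "x = M 0" using h empty_eq by simp
      qed
      then have "E (M 2) = {M 0}" using h(3) by blast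
      then show ?thesis using sub_sing[of "M 3" "M 2" "M 0"] h by auto
    qed
    show "sat E M1 ?\<psi>" by (simp add: sat_def M1_def E_sing[OF zf] n_def e0_def bu)
    show "M1 3 \<noteq> M1 0" using nn by (simp add: M1_def)
    show "sat E M2 ?\<psi>" by (simp add: sat_def M2_def E_sing[OF zf] n_def e0_def bu E_empty[OF zf])
    show "M2 3 \<noteq> M2 2" using nn by (simp add: M2_def)
  qed
qed

lemma prod_empty: "v_prod E a b = v_empty E \<longleftrightarrow> a = v_empty E \<or> b = v_empty E"
proof -
  have "v_prod E a b = v_empty E \<longleftrightarrow> E (v_prod E a b) = {}"
    using empty_eq E_empty[OF zf] by metis
  also have "\<dots> \<longleftrightarrow> E a = {} \<or> E b = {}" by (auto simp: E_prod[OF zf])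
  also have "\<dots> \<longleftrightarrow> a = v_empty E \<or> b = v_empty E" using empty_eq E_empty[OF zf] by metis
  finally show ?thesis .
qed

lemma prod_empty': "v_empty E = v_prod E a b \<longleftrightarrow> a = v_empty E \<or> b = v_empty E"
  using prod_empty by metis

lemma uprod_empty: "v_uprod E a b = v_empty E \<longleftrightarrow> a = v_empty E \<or> b = v_empty E"
proof -
  have "v_uprod E a b = v_empty E \<longleftrightarrow> E (v_uprod E a b) = {}"
    using empty_eq E_empty[OF zf] by metis
  also have "\<dots> \<longleftrightarrow> E a = {} \<or> E b = {}" by (auto simp: E_uprod[OF zf])
  also have "\<dots> \<longleftrightarrow> a = v_empty E \<or> b = v_empty E" using empty_eq E_empty[OF zf] by metis
  finally show ?thesis .
qed

lemma uprod_empty': "v_empty E = v_uprod E a b \<longleftrightarrow> a = v_empty E \<or> b = v_empty E"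
  using uprod_empty by metis

lemma prod_gen:
  assumes "set \<psi> \<subseteq> T"
    and "\<And>M. sat E M \<psi> \<longleftrightarrow> M 0 = v_empty E \<and> (M 1 = v_empty E \<or> M 2 = v_empty E)"
  shows "\<not> convex E T"
proof -
  define e0 where "e0 = v_empty E"
  define n where "n = v_sing E e0"
  define M1 :: "nat \<Rightarrow> 'v" where "M1 = (\<lambda>_. e0)(1 := n)"
  define M2 :: "nat \<Rightarrow> 'v" where "M2 = (\<lambda>_. e0)(2 := n)"
  have nn: "n \<noteq> e0" using n_ne by (simp add: n_def e0_def)
  show ?thesis
  proof (rule noncvx[OF zf, of \<psi> T 1 0 2 0 M1 M2])
    show "set \<psi> \<subseteq> T" by fact
    show "M 1 = M 0 \<or> M 2 = M 0" if "sat E M \<psi>" for M using that assms(2) by auto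
    show "sat E M1 \<psi>" using assms(2) by (simp add: M1_def e0_def)
    show "M1 1 \<noteq> M1 0" using nn by (simp add: M1_def)
    show "sat E M2 \<psi>" using assms(2) by (simp add: M2_def e0_def)
    show "M2 2 \<noteq> M2 0" using nn by (simp add: M2_def)
  qed
qed

lemma mls_prod: "\<not> convex E MLS_prod"
  by (rule prod_gen[of "[Pos (Eq (Var 0) Emp), Pos (Eq (Var 0) (Prod (Var 1) (Var 2)))]"])
     (auto simp: MLS_prod_def mls_atoms_def prod_atoms_def sat_def prod_empty prod_empty')

lemma mls_uprod: "\<not> convex E MLS_uprod"
  by (rule prod_gen[of "[Pos (Eq (Var 0) Emp), Pos (Eq (Var 0) (UProd (Var 1) (Var 2)))]"])
     (auto simp: MLS_uprod_def mls_atoms_def uprod_atoms_def sat_def uprod_empty uprod_empty')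

lemma bst_prod: "\<not> convex E BST_prod"
  by (rule prod_gen[of "[Pos (Eq (Var 0) Emp), Pos (Eq (Prod (Var 1) (Var 2)) Emp)]"])
     (auto simp: BST_prod_def bst_atoms_def sat_def prod_empty prod_empty')

lemma bst_uprod: "\<not> convex E BST_uprod"
  by (rule prod_gen[of "[Pos (Eq (Var 0) Emp), Pos (Eq (UProd (Var 1) (Var 2)) Emp)]"])
     (auto simp: BST_uprod_def bst_atoms_def sat_def uprod_empty uprod_empty')

end

lemma MLSS_sub: "MLSS \<subseteq> MLSSP"
  unfolding MLSS_def MLSSP_def lits_of_def by blast

theorem lemma14:
  fixes E :: "'v \<Rightarrow> 'v set"
  assumes "zf_universe E"
  shows "\<not> convex E MLSS \<and> \<not> convex E MLSP \<and> \<not> convex E MLSSP \<and> \<not> convex E MLSU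
       \<and> \<not> convex E MLS_prod \<and> \<not> convex E MLS_uprod
       \<and> \<not> convex E BST_prod \<and> \<not> convex E BST_uprod"
  using mlss[OF assms] mlsp[OF assms] mlsu[OF assms] mls_prod[OF assms] mls_uprod[OF assms]
    bst_prod[OF assms] bst_uprod[OF assms] convex_mono[OF _ MLSS_sub]
  by blast

end
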